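(* Let $I\ge 2$ and let $\bar A_1,\dots,\bar A_I$ be arrival processes such that each $\bar A_i$ is $(\lambda_i,\nu_i)$-constrained, with $\lambda_i>0$, $\nu_i\ge0$. Then their superposition $\bar A$ is $(\lambda,\nu)$-constrained with $$\lambda=\sum_{i=1}^I\lambda_i,\qquad \nu=\sum_{i=1}^I\nu_i+(I-1).$$
   Context: An arrival process is described by its arrival time function: a nondecreasing sequence $(\bar A(n))_{n\ge 1}$ of nonnegative real numbers, where $\bar A(n)$ is the arrival time of packet $n$. By convention $\bar A(0)=0$, and $\bar A(m,n):=\bar A(n)-\bar A(m)$ for integers $n\ge m\ge 0$. Write $x^+=\max\{x,0\}$. For constants $\lambda>0$ and $\nu\ge 0$, the process is called $(\lambda,\nu)$-constrained if $\bar A(m,n)\ge \frac{1}{\lambda}(n-m-\nu)^+$ for all integers $n\ge m\ge 0$. The superposition (aggregate) of arrival processes $\bar A_1,\dots,\bar A_I$ (each with $\bar A_i(0)=0$) is the arrival process $\bar A$ given by $\bar A(n)=\inf\{\max_{1\le i\le I}\bar A_i(m_i): m_1,\dots,m_I\ge 0 \text{ integers},\ m_1+\cdots+m_I=n\}$ for $n\ge 0$; equivalently, $\bar A(n)$ is the $n$-th smallest element (counted with multiplicity) of the multiset of all packet arrival times $\{\bar A_i(k): 1\le i\le I,\ k\ge 1\}$. *)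

theory Defs
  imports "HOL-Analysis.Analysis"
begin

text \<open>An arrival process: arrival time function A : nat => real, nondecreasing,
  nonnegative, with the convention A 0 = 0.\<close>
definition arrival_process :: "(nat \<Rightarrow> real) \<Rightarrow> bool" where
  "arrival_process A \<longleftrightarrow> A 0 = 0 \<and> mono A \<and> (\<forall>n. 0 \<le> A n)"

definition constrained :: "real \<Rightarrow> real \<Rightarrow> (nat \<Rightarrow> real) \<Rightarrow> bool" where
  "constrained lam nu A \<longleftrightarrow>
     (\<forall>m n. m \<le> n \<longrightarrow> A n - A m \<ge> (1 / lam) * max (real n - real m - nu) 0)"

definition superposition :: "nat \<Rightarrow> (nat \<Rightarrow> nat \<Rightarrow> real) \<Rightarrow> nat \<Rightarrow> real" where
  "superposition I As n =
     Inf {Max ((\<lambda>i. As i (m i)) ` {..<I}) | m :: nat \<Rightarrow> nat. (\<Sum>i<I. m i) = n}"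

end

theory Submission
  imports Defs
begin

lemma reduce_sum:
  fixes j :: "nat \<Rightarrow> nat"
  shows "m \<le> (\<Sum>i<I. j i) \<Longrightarrow> \<exists>j'. (\<forall>i. j' i \<le> j i) \<and> (\<Sum>i<I. j' i) = m"
proof (induction I arbitrary: m)
  case 0
  then show ?case by (intro exI[of _ "\<lambda>_. 0"]) auto
next
  case (Suc I)
  show ?case
  proof (cases "m \<le> j I")
    case True
    have "(\<Sum>i<Suc I. (if i = I then m else 0)) = m" by simp
    then show ?thesis using True by (intro exI[of _ "\<lambda>i. if i = I then m else 0"]) auto
  next
    case False
    then have "m - j I \<le> (\<Sum>i<I. j i)" using Suc.prems by simp
    from Suc.IH[OF this] obtain j'' where h: "\<forall>i. j'' i \<le> j i" "(\<Sum>i<I. j'' i) = m - j I" by blast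
    have "(\<Sum>i<I. (j''(I := j I)) i) = (\<Sum>i<I. j'' i)" by (intro sum.cong) auto
    then have "(\<Sum>i<Suc I. (j''(I := j I)) i) = m" using h False by simp
    then show ?thesis using h by (intro exI[of _ "j''(I := j I)"]) auto
  qed
qed

theorem theorem2:
  fixes I :: nat and As :: "nat \<Rightarrow> nat \<Rightarrow> real"
    and lam nu :: "nat \<Rightarrow> real"
  assumes "I \<ge> 2"
    and "\<And>i. i < I \<Longrightarrow> arrival_process (As i)"
    and "\<And>i. i < I \<Longrightarrow> lam i > 0"
    and "\<And>i. i < I \<Longrightarrow> nu i \<ge> 0"
    and "\<And>i. i < I \<Longrightarrow> constrained (lam i) (nu i) (As i)"
  shows "constrained (\<Sum>i<I. lam i) ((\<Sum>i<I. nu i) + (real I - 1)) (superposition I As)"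
  unfolding constrained_def
proof (intro allI impI)
  fix m n :: nat
  assume mn: "m \<le> n"
  define L where "L = (\<Sum>i<I. lam i)"
  define V where "V = (\<Sum>i<I. nu i) + (real I - 1)"
  define d where "d = max (real n - real m - V) 0 / L"
  define X where "X = (\<lambda>n. {Max ((\<lambda>i. As i (m i)) ` {..<I}) | m :: nat \<Rightarrow> nat. (\<Sum>i<I. m i) = n})"
  have S: "superposition I As k = Inf (X k)" for k unfolding superposition_def X_def by simp
  have I0: "{..<I} \<noteq> {}" using assms(1) by (metis lessThan_iff not_less_eq_eq numeral_2_eq_2 empty_iff zero_less_Suc order_less_le_trans)
  have L0: "L > 0" unfolding L_def using assms(3) I0 by (intro sum_pos) auto
  have d0: "d \<ge> 0" unfolding d_def using L0 by auto
  have AP: "As i 0 = 0" "mono (As i)" "\<And>k. As i k \<ge> 0" if "i < I" for i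
    using assms(2)[OF that] unfolding arrival_process_def by auto
  have CN: "As i b - As i a \<ge> (1 / lam i) * max (real b - real a - nu i) 0" if "i < I" "a \<le> b" for i a b
    using assms(5)[OF that(1)] that(2) unfolding constrained_def by auto
  have bdd: "bdd_below (X k)" for k
  proof -
    have "0 \<le> x" if "x \<in> X k" for x
    proof -
      from that obtain q where x: "x = Max ((\<lambda>i. As i (q i)) ` {..<I})" unfolding X_def by auto
      have "As 0 (q 0) \<le> x" unfolding x using assms(1) by (intro Max_ge) auto
      moreover have "As 0 (q 0) \<ge> 0" using AP(3) assms(1) by auto
      ultimately show ?thesis by linarith
    qed
    then show ?thesis by (intro bdd_belowI[of _ 0]) auto
  qed
  have ne: "X n \<noteq> {}"
  proof -
    have "(\<Sum>i<I. (if i = 0 then n else 0)) = n" using assms(1) by simp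
    then show ?thesis unfolding X_def by blast
  qed
  have key: "Inf (X m) \<le> T - d" if "T \<in> X n" for T
  proof -
    from that obtain k where k: "(\<Sum>i<I. k i) = n" and T: "T = Max ((\<lambda>i. As i (k i)) ` {..<I})"
      unfolding X_def by auto
    have Tk: "As i (k i) \<le> T" if "i < I" for i unfolding T using that by (intro Max_ge) auto
    obtain j where j: "\<forall>i<I. As i (j i) \<le> T - d" and js: "m \<le> (\<Sum>i<I. j i)"
    proof (cases "real n - real m - V \<le> 0")
      case True
      then have "d = 0" unfolding d_def by auto
      then show ?thesis using that[of k] Tk k mn by auto
    next
      case False
      then have dd: "L * d = real n - real m - V" unfolding d_def using L0 by auto
      have lowT: "lam i * T \<ge> real (k i) - nu i" if "i < I" for i
      proof -
        have c: "As i (k i) - As i 0 \<ge> (1 / lam i) * max (real (k i) - real 0 - nu i) 0"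
          using CN[OF that, of 0 "k i"] by (simp only: le0)
        have "(1 / lam i) * max (real (k i) - real 0 - nu i) 0 \<ge> (1 / lam i) * (real (k i) - nu i)"
          using assms(3)[OF that] by (intro mult_left_mono) auto
        with c AP(1)[OF that] have "As i (k i) \<ge> (1 / lam i) * (real (k i) - nu i)" by linarith
        then have "lam i * As i (k i) \<ge> lam i * ((1 / lam i) * (real (k i) - nu i))"
          using assms(3)[OF that] by (intro mult_left_mono) auto
        then have "lam i * As i (k i) \<ge> real (k i) - nu i" using assms(3)[OF that] by simp
        moreover have "lam i * As i (k i) \<le> lam i * T" using Tk[OF that] assms(3)[OF that] by simp
        ultimately show ?thesis by linarith
      qed
      have "L * T = (\<Sum>i<I. lam i * T)" unfolding L_def by (simp add: sum_distrib_right)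
      also have "\<dots> \<ge> (\<Sum>i<I. real (k i) - nu i)" by (intro sum_mono lowT) auto
      finally have "L * T \<ge> real n - (\<Sum>i<I. nu i)" using k by (simp add: sum_subtractf flip: of_nat_sum)
      moreover have "real I \<ge> 1" using assms(1) by simp
      ultimately have "L * T \<ge> L * d" using dd mn unfolding V_def by linarith
      then have Td: "T \<ge> d" using L0 by simp
      define j where "j = (\<lambda>i. nat \<lfloor>real (k i) - nu i - lam i * d\<rfloor>)"
      have jA: "As i (j i) \<le> T - d" if "i < I" for i
      proof (cases "j i = 0")
        case True then show ?thesis using AP(1)[OF that] Td by simp
      next
        case False
        then have jf: "real (j i) = of_int \<lfloor>real (k i) - nu i - lam i * d\<rfloor>" unfolding j_def by simp
        then have jle: "real (j i) \<le> real (k i) - nu i - lam i * d" by linarith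
        have "lam i * d \<ge> 0" using assms(3)[OF that] d0 by simp
        then have "j i \<le> k i" using jle assms(4)[OF that] by linarith
        from CN[OF that this] have "As i (k i) - As i (j i) \<ge> (1 / lam i) * max (real (k i) - real (j i) - nu i) 0" .
        moreover have "(1 / lam i) * max (real (k i) - real (j i) - nu i) 0 \<ge> (1 / lam i) * (lam i * d)"
          using jle assms(3)[OF that] by (intro mult_left_mono) auto
        ultimately have "As i (k i) - As i (j i) \<ge> d" using assms(3)[OF that] by simp
        then show ?thesis using Tk[OF that] by linarith
      qed
      have jlow: "real (j i) > real (k i) - nu i - lam i * d - 1" for i
        unfolding j_def by linarith
      have "real (\<Sum>i<I. j i) = (\<Sum>i<I. real (j i))" by simp
      also have "\<dots> > (\<Sum>i<I. real (k i) - nu i - lam i * d - 1)"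
        using I0 by (intro sum_strict_mono jlow) auto
      also have "(\<Sum>i<I. real (k i) - nu i - lam i * d - 1) = real n - (\<Sum>i<I. nu i) - L * d - real I"
        using k unfolding L_def by (simp add: sum_subtractf sum_distrib_right flip: of_nat_sum)
      also have "\<dots> = real m - 1" using dd unfolding V_def by simp
      finally have "m \<le> (\<Sum>i<I. j i)" by linarith
      then show ?thesis using that[of j] jA by auto
    qed
    from reduce_sum[OF js] obtain j' where j': "\<forall>i. j' i \<le> j i" "(\<Sum>i<I. j' i) = m" by blast
    have "Max ((\<lambda>i. As i (j' i)) ` {..<I}) \<le> T - d"
    proof (subst Max_le_iff)
      show "\<forall>a\<in>(\<lambda>i. As i (j' i)) ` {..<I}. a \<le> T - d"
      proof
        fix a assume "a \<in> (\<lambda>i. As i (j' i)) ` {..<I}"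
        then obtain i where i: "i < I" "a = As i (j' i)" by auto
        have "As i (j' i) \<le> As i (j i)" using AP(2)[OF i(1)] j'(1) by (simp add: monoD)
        then show "a \<le> T - d" using j i by force
      qed
    qed (use I0 in auto)
    moreover have "Max ((\<lambda>i. As i (j' i)) ` {..<I}) \<in> X m" unfolding X_def using j'(2) by blast
    ultimately show ?thesis using cInf_lower[OF _ bdd] by fastforce
  qed
  have "Inf (X m) + d \<le> Inf (X n)"
    using cInf_greatest[OF ne, of "Inf (X m) + d"] key by force
  then show "(1 / (\<Sum>i<I. lam i)) * max (real n - real m - ((\<Sum>i<I. nu i) + (real I - 1))) 0
      \<le> superposition I As n - superposition I As m"
    unfolding S d_def L_def[symmetric] V_def[symmetric] by simp
qed

end
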